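(* Let $G$ be a finitely presented group with only finitely many conjugacy classes of finite subgroups, and let $G'$ be a group. If $G$ and $G'$ are $\mathrm{AE}$-equivalent, then there exists a morphism $\varphi:G\to G'$ that is injective on finite subgroups and maps any two non-conjugate finite subgroups of $G$ to non-conjugate finite subgroups of $G'$.
   Context: Two groups are $\mathrm{AE}$-equivalent if they satisfy the same first-order sentences (in the language of groups) of the form $\forall\bar x\exists\bar y\,\theta(\bar x,\bar y)$ with $\theta$ quantifier-free. *)

theory Defs
  imports "HOL-Algebra.Algebra"
begin

datatype gterm = GVar nat | GOne | GMul gterm gterm | GInv gterm

datatype gqf = GEq gterm gterm | GNeg gqf | GConj gqf gqf | GDisj gqf gqf

fun gterm_eval :: "('a, 'c) monoid_scheme \<Rightarrow> (nat \<Rightarrow> 'a) \<Rightarrow> gterm \<Rightarrow> 'a" where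
  "gterm_eval G e (GVar i) = e i"
| "gterm_eval G e GOne = \<one>\<^bsub>G\<^esub>"
| "gterm_eval G e (GMul s t) = gterm_eval G e s \<otimes>\<^bsub>G\<^esub> gterm_eval G e t"
| "gterm_eval G e (GInv t) = inv\<^bsub>G\<^esub> (gterm_eval G e t)"

fun gqf_sat :: "('a, 'c) monoid_scheme \<Rightarrow> (nat \<Rightarrow> 'a) \<Rightarrow> gqf \<Rightarrow> bool" where
  "gqf_sat G e (GEq s t) = (gterm_eval G e s = gterm_eval G e t)"
| "gqf_sat G e (GNeg \<phi>) = (\<not> gqf_sat G e \<phi>)"
| "gqf_sat G e (GConj \<phi> \<psi>) = (gqf_sat G e \<phi> \<and> gqf_sat G e \<psi>)"
| "gqf_sat G e (GDisj \<phi> \<psi>) = (gqf_sat G e \<phi> \<or> gqf_sat G e \<psi>)"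

text \<open>The AE-sentence given by n and a quantifier-free theta: the variables
  0..n-1 are universally quantified, all other variables occurring in theta are
  existentially quantified (every AE-sentence arises this way up to renaming).\<close>
definition ae_sat :: "('a, 'c) monoid_scheme \<Rightarrow> nat \<Rightarrow> gqf \<Rightarrow> bool" where
  "ae_sat G n \<theta> \<longleftrightarrow>
     (\<forall>e. (\<forall>i. e i \<in> carrier G) \<longrightarrow>
        (\<exists>e'. (\<forall>i. e' i \<in> carrier G) \<and> (\<forall>i<n. e' i = e i) \<and> gqf_sat G e' \<theta>))"

definition AE_equivalent :: "('a, 'c) monoid_scheme \<Rightarrow> ('b, 'd) monoid_scheme \<Rightarrow> bool" where
  "AE_equivalent G H \<longleftrightarrow> (\<forall>n \<theta>. ae_sat G n \<theta> = ae_sat H n \<theta>)"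

text \<open>Words over generators: a letter (i, b) is generator i (b = False) or its inverse (b = True).\<close>
type_synonym word = "(nat \<times> bool) list"

definition word_eval :: "('a, 'c) monoid_scheme \<Rightarrow> (nat \<Rightarrow> 'a) \<Rightarrow> word \<Rightarrow> 'a" where
  "word_eval G s w = foldr (\<lambda>(i, b) acc. (if b then inv\<^bsub>G\<^esub> (s i) else s i) \<otimes>\<^bsub>G\<^esub> acc) w \<one>\<^bsub>G\<^esub>"

text \<open>The congruence on words defining the group presented by generators and relators R
  (as a monoid: free cancellation and deletion of relators, in any context).\<close>
inductive word_equiv :: "word set \<Rightarrow> word \<Rightarrow> word \<Rightarrow> bool" for R where
  refl: "word_equiv R w w"
| sym: "word_equiv R u v \<Longrightarrow> word_equiv R v u"
| trans: "word_equiv R u v \<Longrightarrow> word_equiv R v w \<Longrightarrow> word_equiv R u w"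
| cancel: "word_equiv R (u @ [(i, b), (i, \<not> b)] @ v) (u @ v)"
| relator: "r \<in> R \<Longrightarrow> word_equiv R (u @ r @ v) (u @ v)"

definition finitely_presented :: "('a, 'c) monoid_scheme \<Rightarrow> bool" where
  "finitely_presented G \<longleftrightarrow>
     (\<exists>n s R. (\<forall>i<n. s i \<in> carrier G) \<and> generate G (s ` {..<n}) = carrier G \<and>
        finite R \<and> (\<forall>r\<in>R. \<forall>(i, b)\<in>set r. i < n) \<and>
        (\<forall>r\<in>R. word_eval G s r = \<one>\<^bsub>G\<^esub>) \<and>
        (\<forall>w. (\<forall>(i, b)\<in>set w. i < n) \<longrightarrow> word_eval G s w = \<one>\<^bsub>G\<^esub> \<longrightarrow> word_equiv R w []))"

definition finite_subgroups :: "('a, 'c) monoid_scheme \<Rightarrow> 'a set set" where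
  "finite_subgroups G = {H. subgroup H G \<and> finite H}"

definition conjugate_subgroups :: "('a, 'c) monoid_scheme \<Rightarrow> 'a set \<Rightarrow> 'a set \<Rightarrow> bool" where
  "conjugate_subgroups G H K \<longleftrightarrow>
     (\<exists>g\<in>carrier G. K = (\<lambda>h. g \<otimes>\<^bsub>G\<^esub> h \<otimes>\<^bsub>G\<^esub> inv\<^bsub>G\<^esub> g) ` H)"

definition finitely_many_conj_classes_finite_subgroups :: "('a, 'c) monoid_scheme \<Rightarrow> bool" where
  "finitely_many_conj_classes_finite_subgroups G \<longleftrightarrow>
     (\<exists>F. finite F \<and> F \<subseteq> finite_subgroups G \<and>
        (\<forall>H\<in>finite_subgroups G. \<exists>K\<in>F. conjugate_subgroups G K H))"

end

theory Submission
  imports Defs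
begin

definition term_of_word :: "word \<Rightarrow> gterm" where
  "term_of_word w = foldr (\<lambda>(i, b) acc. GMul (if b then GInv (GVar i) else GVar i) acc) w GOne"

lemma term_of_word_eval: "gterm_eval G e (term_of_word w) = word_eval G e w"
  by (induction w) (auto simp: term_of_word_def word_eval_def)

lemma word_eval_Nil[simp]: "word_eval G s [] = \<one>\<^bsub>G\<^esub>"
  by (simp add: word_eval_def)

lemma word_eval_Cons[simp]: "word_eval G s ((i,b) # w) = (if b then inv\<^bsub>G\<^esub> (s i) else s i) \<otimes>\<^bsub>G\<^esub> word_eval G s w"
  by (simp add: word_eval_def)

lemma word_eval_cong: "(\<And>i b. (i,b) \<in> set w \<Longrightarrow> s i = t i) \<Longrightarrow> word_eval G s w = word_eval G t w"
proof (induction w)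
  case (Cons a w)
  obtain i b where a: "a = (i,b)" by fastforce
  have "s i = t i" using Cons.prems a by auto
  moreover have "word_eval G s w = word_eval G t w" using Cons by (meson list.set_intros(2))
  ultimately show ?case using a by simp
qed simp

lemma (in group) word_eval_closed: "(\<And>i. s i \<in> carrier G) \<Longrightarrow> word_eval G s w \<in> carrier G"
  by (induction w) auto

lemma (in group) word_eval_append:
  "(\<And>i. s i \<in> carrier G) \<Longrightarrow> word_eval G s (u @ v) = word_eval G s u \<otimes> word_eval G s v"
  by (induction u) (auto simp: m_assoc word_eval_closed)

definition invw :: "word \<Rightarrow> word" where
  "invw w = rev (map (\<lambda>(i,b). (i, \<not> b)) w)"

lemma (in group) word_eval_invw:
  "(\<And>i. s i \<in> carrier G) \<Longrightarrow> word_eval G s (invw w) = inv (word_eval G s w)"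
proof (induction w)
  case Nil then show ?case by (simp add: invw_def)
next
  case (Cons a w)
  obtain i b where a: "a = (i,b)" by fastforce
  have "invw (a # w) = invw w @ [(i, \<not> b)]" by (simp add: invw_def a)
  then show ?case using Cons
    by (simp add: word_eval_append a word_eval_closed inv_mult_group)
qed

lemma set_invw: "set (invw w) = (\<lambda>(i,b). (i, \<not> b)) ` set w"
  by (simp add: invw_def)

lemma (in group) word_equiv_eval:
  assumes "word_equiv R u v" "\<And>i. s i \<in> carrier G" "\<And>r. r \<in> R \<Longrightarrow> word_eval G s r = \<one>"
  shows "word_eval G s u = word_eval G s v"
  using assms(1)
proof induction
  case (cancel u i b v)
  have "word_eval G s ([(i, b), (i, \<not> b)] @ v) = word_eval G s v"
    using assms(2) by (auto simp: m_assoc[symmetric] word_eval_closed)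
  then show ?case using assms(2) by (simp only: word_eval_append)
next
  case (relator r u v)
  then show ?case using assms(2,3) by (simp add: word_eval_append word_eval_closed)
qed auto

lemma (in group) generate_words:
  assumes "g \<in> generate G (s ` {..<n})" "\<And>i. s i \<in> carrier G"
  shows "\<exists>w. (\<forall>(i,b)\<in>set w. i < n) \<and> word_eval G s w = g"
  using assms(1)
proof induction
  case one then show ?case by (intro exI[of _ "[]"]) auto
next
  case (incl h) then obtain i where "i < n" "h = s i" by auto
  then show ?case using assms(2) by (intro exI[of _ "[(i,False)]"]) auto
next
  case (inv h) then obtain i where "i < n" "h = s i" by auto
  then show ?case using assms(2) by (intro exI[of _ "[(i,True)]"]) auto
next
  case (eng h1 h2)
  then obtain w1 w2 where "\<forall>(i,b)\<in>set w1. i < n" "word_eval G s w1 = h1"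
      "\<forall>(i,b)\<in>set w2. i < n" "word_eval G s w2 = h2" by blast
  then show ?case using assms(2) by (intro exI[of _ "w1 @ w2"]) (auto simp: word_eval_append)
qed

fun bigand :: "gqf list \<Rightarrow> gqf" where
  "bigand [] = GEq GOne GOne"
| "bigand (f # l) = GConj f (bigand l)"

fun bigor :: "gqf list \<Rightarrow> gqf" where
  "bigor [] = GNeg (GEq GOne GOne)"
| "bigor (f # l) = GDisj f (bigor l)"

lemma bigand_sat[simp]: "gqf_sat G e (bigand l) = (\<forall>f\<in>set l. gqf_sat G e f)"
  by (induction l) auto

lemma bigor_sat[simp]: "gqf_sat G e (bigor l) = (\<exists>f\<in>set l. gqf_sat G e f)"
  by (induction l) auto

definition conjs :: "('a, 'c) monoid_scheme \<Rightarrow> 'a \<Rightarrow> 'a \<Rightarrow> 'a" where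
  "conjs G g u = g \<otimes>\<^bsub>G\<^esub> u \<otimes>\<^bsub>G\<^esub> inv\<^bsub>G\<^esub> g"

lemma (in group) conj_comp:
  assumes "g \<in> carrier G" "h \<in> carrier G" "A \<subseteq> carrier G"
  shows "(\<lambda>u. g \<otimes> u \<otimes> inv g) ` ((\<lambda>u. h \<otimes> u \<otimes> inv h) ` A) = (\<lambda>u. (g \<otimes> h) \<otimes> u \<otimes> inv (g \<otimes> h)) ` A"
proof -
  have "\<And>u. u \<in> A \<Longrightarrow> g \<otimes> (h \<otimes> u \<otimes> inv h) \<otimes> inv g = (g \<otimes> h) \<otimes> u \<otimes> inv (g \<otimes> h)"
    using assms by (auto simp: m_assoc inv_mult_group subsetD)
  then show ?thesis by (auto simp: image_image intro!: image_cong)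
qed

lemma (in group) conj_sym:
  assumes "A \<subseteq> carrier G" "conjugate_subgroups G A B"
  shows "conjugate_subgroups G B A"
proof -
  obtain g where g: "g \<in> carrier G" "B = (\<lambda>h. g \<otimes> h \<otimes> inv g) ` A"
    using assms(2) by (auto simp: conjugate_subgroups_def)
  have "(\<lambda>h. inv g \<otimes> h \<otimes> inv (inv g)) ` B = (\<lambda>u. (inv g \<otimes> g) \<otimes> u \<otimes> inv (inv g \<otimes> g)) ` A"
    unfolding g(2) by (rule conj_comp) (use g assms(1) in auto)
  also have "\<dots> = A" using g assms(1) by (auto simp: subsetD)
  finally show ?thesis using g unfolding conjugate_subgroups_def
    by (intro bexI[of _ "inv g"]) auto
qed

lemma (in group) conj_trans:
  assumes "A \<subseteq> carrier G" "conjugate_subgroups G A B" "conjugate_subgroups G B C"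
  shows "conjugate_subgroups G A C"
proof -
  obtain g where g: "g \<in> carrier G" "B = (\<lambda>h. g \<otimes> h \<otimes> inv g) ` A"
    using assms(2) by (auto simp: conjugate_subgroups_def)
  obtain k where k: "k \<in> carrier G" "C = (\<lambda>h. k \<otimes> h \<otimes> inv k) ` B"
    using assms(3) by (auto simp: conjugate_subgroups_def)
  show ?thesis unfolding conjugate_subgroups_def
    using g k assms(1) by (intro bexI[of _ "k \<otimes> g"]) (auto simp: conj_comp)
qed

lemma conj_hom_image:
  assumes "group_hom G H f" "g \<in> carrier G" "A \<subseteq> carrier G"
  shows "f ` ((\<lambda>u. g \<otimes>\<^bsub>G\<^esub> u \<otimes>\<^bsub>G\<^esub> inv\<^bsub>G\<^esub> g) ` A)
       = (\<lambda>u. f g \<otimes>\<^bsub>H\<^esub> u \<otimes>\<^bsub>H\<^esub> inv\<^bsub>H\<^esub> (f g)) ` (f ` A)"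
proof -
  interpret group_hom G H f by fact
  have "\<And>u. u \<in> A \<Longrightarrow> f (g \<otimes>\<^bsub>G\<^esub> u \<otimes>\<^bsub>G\<^esub> inv\<^bsub>G\<^esub> g) = f g \<otimes>\<^bsub>H\<^esub> f u \<otimes>\<^bsub>H\<^esub> inv\<^bsub>H\<^esub> (f g)"
    using assms by (auto simp: subsetD)
  then show ?thesis by (auto simp: image_image intro!: image_cong)
qed

theorem lemma8p8:
  fixes G :: "('a, 'c) monoid_scheme" and G' :: "('b, 'd) monoid_scheme"
  assumes "group G" and "group G'"
    and "finitely_presented G"
    and "finitely_many_conj_classes_finite_subgroups G"
    and "AE_equivalent G G'"
  shows "\<exists>\<phi>\<in>hom G G'.
           (\<forall>H\<in>finite_subgroups G. inj_on \<phi> H) \<and>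
           (\<forall>H\<in>finite_subgroups G. \<forall>K\<in>finite_subgroups G.
              \<not> conjugate_subgroups G H K \<longrightarrow>
              \<phi> ` H \<in> finite_subgroups G' \<and> \<phi> ` K \<in> finite_subgroups G' \<and>
              \<not> conjugate_subgroups G' (\<phi> ` H) (\<phi> ` K))"
proof -
  interpret G: group G by fact
  interpret G': group G' by fact
  obtain n s R where sc: "\<forall>i<n. s i \<in> carrier G" and gen: "generate G (s ` {..<n}) = carrier G"
    and finR: "finite R" and Rv: "\<forall>r\<in>R. \<forall>(i, b)\<in>set r. i < n"
    and Rone: "\<forall>r\<in>R. word_eval G s r = \<one>\<^bsub>G\<^esub>"
    and pres: "\<forall>w. (\<forall>(i, b)\<in>set w. i < n) \<longrightarrow> word_eval G s w = \<one>\<^bsub>G\<^esub> \<longrightarrow> word_equiv R w []"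
    using assms(3) unfolding finitely_presented_def by blast
  define s' where "s' i = (if i < n then s i else \<one>\<^bsub>G\<^esub>)" for i
  have s'c: "\<And>i. s' i \<in> carrier G" using sc by (simp add: s'_def)
  have evs': "word_eval G s' w = word_eval G s w" if "\<forall>(i, b)\<in>set w. i < n" for w
    using that by (intro word_eval_cong) (auto simp: s'_def)
  have "s' ` {..<n} = s ` {..<n}" by (auto simp: s'_def)
  with gen have gen': "generate G (s' ` {..<n}) = carrier G" by simp
  define wd where "wd g = (SOME w. (\<forall>(i, b)\<in>set w. i < n) \<and> word_eval G s' w = g)" for g
  have wd: "(\<forall>(i, b)\<in>set (wd g). i < n) \<and> word_eval G s' (wd g) = g" if "g \<in> carrier G" for g
    unfolding wd_def
    by (rule someI_ex) (use G.generate_words[of g s' n] that gen' s'c in auto)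
  obtain F where finF: "finite F" and FG: "F \<subseteq> finite_subgroups G"
    and Fcov: "\<forall>H\<in>finite_subgroups G. \<exists>K\<in>F. conjugate_subgroups G K H"
    using assms(4) unfolding finitely_many_conj_classes_finite_subgroups_def by blast
  have Fsub: "H \<subseteq> carrier G" "finite H" if "H \<in> F" for H
    using that FG by (auto simp: finite_subgroups_def dest: subgroup.subset)
  obtain lR where lR: "set lR = R" using finR finite_list by blast
  obtain lF where lF: "set lF = F" using finF finite_list by blast
  define lst where "lst = (\<lambda>A::'a set. SOME l. set l = A)"
  have lst: "set (lst A) = A" if "finite A" for A
    unfolding lst_def by (rule someI_ex) (use that finite_list in auto)
  define tm where "tm g = term_of_word (wd g)" for g
  define cz where "cz t = GMul (GMul (GVar n) t) (GInv (GVar n))" for t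
  define Rel where "Rel = bigand (map (\<lambda>r. GEq (term_of_word r) GOne) lR)"
  define Inj where "Inj = bigand [GNeg (GEq (tm a) (tm b)). H \<leftarrow> lF, a \<leftarrow> lst H, b \<leftarrow> lst H, a \<noteq> b]"
  define NC where "NC = bigand [GDisj (bigor [bigand [GNeg (GEq (cz (tm a)) (tm b)). b \<leftarrow> lst K]. a \<leftarrow> lst H])
       (bigor [bigand [GNeg (GEq (cz (tm a)) (tm b)). a \<leftarrow> lst H]. b \<leftarrow> lst K]).
       H \<leftarrow> lF, K \<leftarrow> lF, \<not> conjugate_subgroups G H K]"
  define Psi where "Psi = GConj Rel (GConj Inj NC)"
  have semG: "gqf_sat G e Psi \<longleftrightarrow> (\<forall>r\<in>R. word_eval G e r = \<one>\<^bsub>G\<^esub>) \<and>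
     (\<forall>H\<in>F. \<forall>a\<in>H. \<forall>b\<in>H. a \<noteq> b \<longrightarrow> word_eval G e (wd a) \<noteq> word_eval G e (wd b)) \<and>
     (\<forall>H\<in>F. \<forall>K\<in>F. \<not> conjugate_subgroups G H K \<longrightarrow>
        ((\<exists>a\<in>H. \<forall>b\<in>K. e n \<otimes>\<^bsub>G\<^esub> word_eval G e (wd a) \<otimes>\<^bsub>G\<^esub> inv\<^bsub>G\<^esub> (e n) \<noteq> word_eval G e (wd b)) \<or>
         (\<exists>b\<in>K. \<forall>a\<in>H. e n \<otimes>\<^bsub>G\<^esub> word_eval G e (wd a) \<otimes>\<^bsub>G\<^esub> inv\<^bsub>G\<^esub> (e n) \<noteq> word_eval G e (wd b))))" for e
    by (simp add: Psi_def Rel_def Inj_def NC_def lR lF lst Fsub tm_def cz_def term_of_word_eval; blast)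
  have semG': "gqf_sat G' e Psi \<longleftrightarrow> (\<forall>r\<in>R. word_eval G' e r = \<one>\<^bsub>G'\<^esub>) \<and>
     (\<forall>H\<in>F. \<forall>a\<in>H. \<forall>b\<in>H. a \<noteq> b \<longrightarrow> word_eval G' e (wd a) \<noteq> word_eval G' e (wd b)) \<and>
     (\<forall>H\<in>F. \<forall>K\<in>F. \<not> conjugate_subgroups G H K \<longrightarrow>
        ((\<exists>a\<in>H. \<forall>b\<in>K. e n \<otimes>\<^bsub>G'\<^esub> word_eval G' e (wd a) \<otimes>\<^bsub>G'\<^esub> inv\<^bsub>G'\<^esub> (e n) \<noteq> word_eval G' e (wd b)) \<or>
         (\<exists>b\<in>K. \<forall>a\<in>H. e n \<otimes>\<^bsub>G'\<^esub> word_eval G' e (wd a) \<otimes>\<^bsub>G'\<^esub> inv\<^bsub>G'\<^esub> (e n) \<noteq> word_eval G' e (wd b))))" for e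
    by (simp add: Psi_def Rel_def Inj_def NC_def lR lF lst Fsub tm_def cz_def term_of_word_eval; blast)
  have notG: "\<not> ae_sat G n (GNeg Psi)"
  proof
    assume "ae_sat G n (GNeg Psi)"
    then obtain e' where e'c: "\<forall>i. e' i \<in> carrier G" and agr: "\<forall>i<n. e' i = s' i"
      and ns: "\<not> gqf_sat G e' Psi"
      unfolding ae_sat_def using s'c by (metis gqf_sat.simps(2))
    have ev: "word_eval G e' w = word_eval G s w" if "\<forall>(i, b)\<in>set w. i < n" for w
    proof -
      have "word_eval G e' w = word_eval G s' w"
        using that agr by (intro word_eval_cong) auto
      then show ?thesis using evs' that by simp
    qed
    have wdH: "word_eval G e' (wd a) = a" if "H \<in> F" "a \<in> H" for H a
    proof -
      have "a \<in> carrier G" using Fsub that by blast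
      then show ?thesis using wd[of a] ev[of "wd a"] evs'[of "wd a"] by simp
    qed
    have "gqf_sat G e' Psi"
      unfolding semG
    proof (intro conjI ballI impI)
      fix r assume "r \<in> R" then show "word_eval G e' r = \<one>\<^bsub>G\<^esub>" using ev[of r] Rv Rone by simp
    next
      fix H a b assume "H \<in> F" "a \<in> H" "b \<in> H" "a \<noteq> b"
      then show "word_eval G e' (wd a) \<noteq> word_eval G e' (wd b)" using wdH by simp
    next
      fix H K assume HK: "H \<in> F" "K \<in> F" "\<not> conjugate_subgroups G H K"
      let ?z = "e' n"
      show "(\<exists>a\<in>H. \<forall>b\<in>K. ?z \<otimes>\<^bsub>G\<^esub> word_eval G e' (wd a) \<otimes>\<^bsub>G\<^esub> inv\<^bsub>G\<^esub> ?z \<noteq> word_eval G e' (wd b)) \<or>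
         (\<exists>b\<in>K. \<forall>a\<in>H. ?z \<otimes>\<^bsub>G\<^esub> word_eval G e' (wd a) \<otimes>\<^bsub>G\<^esub> inv\<^bsub>G\<^esub> ?z \<noteq> word_eval G e' (wd b))"
      proof (rule ccontr)
        assume c: "\<not> ?thesis"
        have "K = (\<lambda>h. ?z \<otimes>\<^bsub>G\<^esub> h \<otimes>\<^bsub>G\<^esub> inv\<^bsub>G\<^esub> ?z) ` H"
        proof -
          have c1: "\<forall>a\<in>H. \<exists>b\<in>K. ?z \<otimes>\<^bsub>G\<^esub> a \<otimes>\<^bsub>G\<^esub> inv\<^bsub>G\<^esub> ?z = b"
            using c wdH HK by (simp cong: bex_cong ball_cong)
          have c2: "\<forall>b\<in>K. \<exists>a\<in>H. ?z \<otimes>\<^bsub>G\<^esub> a \<otimes>\<^bsub>G\<^esub> inv\<^bsub>G\<^esub> ?z = b"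
            using c wdH HK by (simp cong: bex_cong ball_cong)
          show ?thesis
          proof (intro equalityI subsetI)
            fix b assume "b \<in> K"
            then obtain a where "a \<in> H" "?z \<otimes>\<^bsub>G\<^esub> a \<otimes>\<^bsub>G\<^esub> inv\<^bsub>G\<^esub> ?z = b" using c2 by blast
            then show "b \<in> (\<lambda>h. ?z \<otimes>\<^bsub>G\<^esub> h \<otimes>\<^bsub>G\<^esub> inv\<^bsub>G\<^esub> ?z) ` H" by (rule rev_image_eqI[OF _ HOL.sym])
          next
            fix b assume "b \<in> (\<lambda>h. ?z \<otimes>\<^bsub>G\<^esub> h \<otimes>\<^bsub>G\<^esub> inv\<^bsub>G\<^esub> ?z) ` H"
            then obtain a where "a \<in> H" "b = ?z \<otimes>\<^bsub>G\<^esub> a \<otimes>\<^bsub>G\<^esub> inv\<^bsub>G\<^esub> ?z" by blast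
            then show "b \<in> K" using c1 by blast
          qed
        qed
        then have "conjugate_subgroups G H K" using e'c unfolding conjugate_subgroups_def by blast
        with HK show False by simp
      qed
    qed
    with ns show False by simp
  qed
  then have "\<not> ae_sat G' n (GNeg Psi)" using assms(5) unfolding AE_equivalent_def by blast
  then obtain e where ec: "\<forall>i. e i \<in> carrier G'"
    and allsat: "\<And>e'. \<forall>i. e' i \<in> carrier G' \<Longrightarrow> \<forall>i<n. e' i = e i \<Longrightarrow> gqf_sat G' e' Psi"
    unfolding ae_sat_def by (metis gqf_sat.simps(2))
  define \<phi> where "\<phi> g = word_eval G' e (wd g)" for g
  have satz: "gqf_sat G' (e(n := z)) Psi" if "z \<in> carrier G'" for z
    using ec that by (intro allsat) auto
  have evz: "word_eval G' (e(n := z)) w = word_eval G' e w" if "\<forall>(i, b)\<in>set w. i < n" for w z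
    using that by (intro word_eval_cong) auto
  have "gqf_sat G' e Psi" using satz[of "e n"] ec by simp
  then have relG': "\<And>r. r \<in> R \<Longrightarrow> word_eval G' e r = \<one>\<^bsub>G'\<^esub>"
    and injF': "\<And>H a b. H \<in> F \<Longrightarrow> a \<in> H \<Longrightarrow> b \<in> H \<Longrightarrow> \<phi> a = \<phi> b \<Longrightarrow> a = b"
    unfolding semG' \<phi>_def by blast+
  have ncF: "(\<exists>a\<in>H. \<forall>b\<in>K. z \<otimes>\<^bsub>G'\<^esub> \<phi> a \<otimes>\<^bsub>G'\<^esub> inv\<^bsub>G'\<^esub> z \<noteq> \<phi> b) \<or>
         (\<exists>b\<in>K. \<forall>a\<in>H. z \<otimes>\<^bsub>G'\<^esub> \<phi> a \<otimes>\<^bsub>G'\<^esub> inv\<^bsub>G'\<^esub> z \<noteq> \<phi> b)"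
    if "H \<in> F" "K \<in> F" "\<not> conjugate_subgroups G H K" "z \<in> carrier G'" for H K z
  proof -
    have v: "\<forall>(i, b)\<in>set (wd a). i < n" if "a \<in> H \<union> K" for a
      using wd Fsub that \<open>H \<in> F\<close> \<open>K \<in> F\<close> by blast
    have eH: "\<And>a. a \<in> H \<Longrightarrow> word_eval G' (e(n := z)) (wd a) = \<phi> a"
      using evz v unfolding \<phi>_def by blast
    have eK: "\<And>a. a \<in> K \<Longrightarrow> word_eval G' (e(n := z)) (wd a) = \<phi> a"
      using evz v unfolding \<phi>_def by blast
    have S: "(\<exists>a\<in>H. \<forall>b\<in>K. z \<otimes>\<^bsub>G'\<^esub> word_eval G' (e(n := z)) (wd a) \<otimes>\<^bsub>G'\<^esub> inv\<^bsub>G'\<^esub> z \<noteq> word_eval G' (e(n := z)) (wd b)) \<or>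
         (\<exists>b\<in>K. \<forall>a\<in>H. z \<otimes>\<^bsub>G'\<^esub> word_eval G' (e(n := z)) (wd a) \<otimes>\<^bsub>G'\<^esub> inv\<^bsub>G'\<^esub> z \<noteq> word_eval G' (e(n := z)) (wd b))"
      using satz[OF that(4)] that unfolding semG' by simp
    show ?thesis using S by (simp add: eH eK cong: bex_cong ball_cong)
  qed
  have key: "\<phi> (word_eval G s' w) = word_eval G' e w" if vw: "\<forall>(i, b)\<in>set w. i < n" for w
  proof -
    define g where "g = word_eval G s' w"
    have gc: "g \<in> carrier G" unfolding g_def using s'c by (rule G.word_eval_closed)
    have v: "\<forall>(i, b)\<in>set (wd g @ invw w). i < n" using wd[OF gc] vw by (auto simp: set_invw)
    have "word_eval G s' (wd g @ invw w) = \<one>\<^bsub>G\<^esub>"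
      using wd[OF gc] s'c by (simp add: G.word_eval_append G.word_eval_invw g_def G.word_eval_closed)
    then have "word_eval G s (wd g @ invw w) = \<one>\<^bsub>G\<^esub>" using evs'[OF v] by simp
    then have "word_equiv R (wd g @ invw w) []" using pres v by blast
    then have "word_eval G' e (wd g @ invw w) = \<one>\<^bsub>G'\<^esub>"
      using G'.word_equiv_eval[of R _ _ e] ec relG' by simp
    then have "\<phi> g \<otimes>\<^bsub>G'\<^esub> inv\<^bsub>G'\<^esub> (word_eval G' e w) = \<one>\<^bsub>G'\<^esub>"
      using ec by (simp add: G'.word_eval_append G'.word_eval_invw \<phi>_def)
    then show ?thesis unfolding g_def[symmetric]
    proof -
      have wc: "word_eval G' e w \<in> carrier G'" using ec by (intro G'.word_eval_closed) auto
      have pc: "\<phi> g \<in> carrier G'" unfolding \<phi>_def using ec by (intro G'.word_eval_closed) auto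
      have "inv\<^bsub>G'\<^esub> (inv\<^bsub>G'\<^esub> (word_eval G' e w)) = \<phi> g"
        by (rule G'.inv_equality) (use \<open>\<phi> g \<otimes>\<^bsub>G'\<^esub> inv\<^bsub>G'\<^esub> (word_eval G' e w) = \<one>\<^bsub>G'\<^esub>\<close> wc pc in auto)
      then show "\<phi> g = word_eval G' e w" using wc by simp
    qed
  qed
  have \<phi>c: "\<phi> g \<in> carrier G'" for g unfolding \<phi>_def using ec by (intro G'.word_eval_closed) auto
  have hom: "\<phi> \<in> hom G G'"
  proof (rule homI)
    fix x y assume xy: "x \<in> carrier G" "y \<in> carrier G"
    have "x \<otimes>\<^bsub>G\<^esub> y = word_eval G s' (wd x @ wd y)"
      using wd xy s'c by (simp add: G.word_eval_append)
    moreover have "\<forall>(i, b)\<in>set (wd x @ wd y). i < n" using wd xy by auto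
    ultimately show "\<phi> (x \<otimes>\<^bsub>G\<^esub> y) = \<phi> x \<otimes>\<^bsub>G'\<^esub> \<phi> y"
      using key ec by (simp add: G'.word_eval_append \<phi>_def)
  qed (rule \<phi>c)
  interpret gh: group_hom G G' \<phi> using hom by unfold_locales
  have gh: "group_hom G G' \<phi>" by unfold_locales
  have rep: "\<exists>H0\<in>F. \<exists>g\<in>carrier G. H = (\<lambda>h. g \<otimes>\<^bsub>G\<^esub> h \<otimes>\<^bsub>G\<^esub> inv\<^bsub>G\<^esub> g) ` H0"
    if "H \<in> finite_subgroups G" for H
    using Fcov that unfolding conjugate_subgroups_def by blast
  have fsG: "H \<subseteq> carrier G" if "H \<in> finite_subgroups G" for H
    using that by (auto simp: finite_subgroups_def dest: subgroup.subset)
  have img: "\<phi> ` H \<in> finite_subgroups G'" if "H \<in> finite_subgroups G" for H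
    using that gh.subgroup_img_is_subgroup by (auto simp: finite_subgroups_def)
  show ?thesis
  proof (intro bexI[OF _ hom] conjI ballI impI)
    fix H assume H: "H \<in> finite_subgroups G"
    obtain H0 g where H0: "H0 \<in> F" "g \<in> carrier G" "H = (\<lambda>h. g \<otimes>\<^bsub>G\<^esub> h \<otimes>\<^bsub>G\<^esub> inv\<^bsub>G\<^esub> g) ` H0"
      using rep[OF H] by blast
    show "inj_on \<phi> H"
    proof (rule inj_onI)
      fix x y assume "x \<in> H" "y \<in> H" and e: "\<phi> x = \<phi> y"
      then obtain a b where ab: "a \<in> H0" "b \<in> H0" "x = g \<otimes>\<^bsub>G\<^esub> a \<otimes>\<^bsub>G\<^esub> inv\<^bsub>G\<^esub> g" "y = g \<otimes>\<^bsub>G\<^esub> b \<otimes>\<^bsub>G\<^esub> inv\<^bsub>G\<^esub> g"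
        using H0 by auto
      have abc: "a \<in> carrier G" "b \<in> carrier G" using ab Fsub H0 by auto
      have "\<phi> g \<otimes>\<^bsub>G'\<^esub> \<phi> a \<otimes>\<^bsub>G'\<^esub> inv\<^bsub>G'\<^esub> (\<phi> g) = \<phi> g \<otimes>\<^bsub>G'\<^esub> \<phi> b \<otimes>\<^bsub>G'\<^esub> inv\<^bsub>G'\<^esub> (\<phi> g)"
        using e ab abc H0 by simp
      then have "\<phi> a = \<phi> b" using \<phi>c H0
        by simp
      then have "a = b" using injF' H0 ab by blast
      then show "x = y" using ab by simp
    qed
  next
    fix H K assume H: "H \<in> finite_subgroups G" and K: "K \<in> finite_subgroups G"
      and nc: "\<not> conjugate_subgroups G H K"
    show "\<phi> ` H \<in> finite_subgroups G'" using img H by blast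
    show "\<phi> ` K \<in> finite_subgroups G'" using img K by blast
    obtain H0 g where H0: "H0 \<in> F" "g \<in> carrier G" "H = (\<lambda>h. g \<otimes>\<^bsub>G\<^esub> h \<otimes>\<^bsub>G\<^esub> inv\<^bsub>G\<^esub> g) ` H0"
      using rep[OF H] by blast
    obtain K0 k where K0: "K0 \<in> F" "k \<in> carrier G" "K = (\<lambda>h. k \<otimes>\<^bsub>G\<^esub> h \<otimes>\<^bsub>G\<^esub> inv\<^bsub>G\<^esub> k) ` K0"
      using rep[OF K] by blast
    have cH: "conjugate_subgroups G H0 H" using H0 unfolding conjugate_subgroups_def by blast
    have cK: "conjugate_subgroups G K0 K" using K0 unfolding conjugate_subgroups_def by blast
    have nc0: "\<not> conjugate_subgroups G H0 K0"
    proof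
      assume "conjugate_subgroups G H0 K0"
      then have "conjugate_subgroups G H0 K" using G.conj_trans cK Fsub H0 by blast
      moreover have "conjugate_subgroups G H H0" using G.conj_sym cH Fsub H0 by blast
      ultimately have "conjugate_subgroups G H K" using G.conj_trans fsG H by blast
      with nc show False by simp
    qed
    show "\<not> conjugate_subgroups G' (\<phi> ` H) (\<phi> ` K)"
    proof
      assume c: "conjugate_subgroups G' (\<phi> ` H) (\<phi> ` K)"
      have sH0: "\<phi> ` H0 \<subseteq> carrier G'" and sK0: "\<phi> ` K0 \<subseteq> carrier G'" using \<phi>c by auto
      have "\<phi> ` H = (\<lambda>u. \<phi> g \<otimes>\<^bsub>G'\<^esub> u \<otimes>\<^bsub>G'\<^esub> inv\<^bsub>G'\<^esub> (\<phi> g)) ` (\<phi> ` H0)"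
        using conj_hom_image[OF gh H0(2)] Fsub H0 by simp
      then have c1: "conjugate_subgroups G' (\<phi> ` H0) (\<phi> ` H)"
        unfolding conjugate_subgroups_def using \<phi>c by blast
      have "\<phi> ` K = (\<lambda>u. \<phi> k \<otimes>\<^bsub>G'\<^esub> u \<otimes>\<^bsub>G'\<^esub> inv\<^bsub>G'\<^esub> (\<phi> k)) ` (\<phi> ` K0)"
        using conj_hom_image[OF gh K0(2)] Fsub K0 by simp
      then have "conjugate_subgroups G' (\<phi> ` K0) (\<phi> ` K)"
        unfolding conjugate_subgroups_def using \<phi>c by blast
      then have c2: "conjugate_subgroups G' (\<phi> ` K) (\<phi> ` K0)"
        using G'.conj_sym sK0 by blast
      have "conjugate_subgroups G' (\<phi> ` H0) (\<phi> ` K)" using G'.conj_trans[OF sH0 c1 c] .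
      then have "conjugate_subgroups G' (\<phi> ` H0) (\<phi> ` K0)" using G'.conj_trans[OF sH0 _ c2] by blast
      then obtain z where z: "z \<in> carrier G'" "\<phi> ` K0 = (\<lambda>u. z \<otimes>\<^bsub>G'\<^esub> u \<otimes>\<^bsub>G'\<^esub> inv\<^bsub>G'\<^esub> z) ` (\<phi> ` H0)"
        unfolding conjugate_subgroups_def by blast
      have "\<forall>a\<in>H0. \<exists>b\<in>K0. z \<otimes>\<^bsub>G'\<^esub> \<phi> a \<otimes>\<^bsub>G'\<^esub> inv\<^bsub>G'\<^esub> z = \<phi> b"
      proof
        fix a assume "a \<in> H0"
        then have "z \<otimes>\<^bsub>G'\<^esub> \<phi> a \<otimes>\<^bsub>G'\<^esub> inv\<^bsub>G'\<^esub> z \<in> \<phi> ` K0" using z by auto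
        then show "\<exists>b\<in>K0. z \<otimes>\<^bsub>G'\<^esub> \<phi> a \<otimes>\<^bsub>G'\<^esub> inv\<^bsub>G'\<^esub> z = \<phi> b" by auto
      qed
      moreover have "\<forall>b\<in>K0. \<exists>a\<in>H0. z \<otimes>\<^bsub>G'\<^esub> \<phi> a \<otimes>\<^bsub>G'\<^esub> inv\<^bsub>G'\<^esub> z = \<phi> b"
      proof
        fix b assume "b \<in> K0"
        then have "\<phi> b \<in> (\<lambda>u. z \<otimes>\<^bsub>G'\<^esub> u \<otimes>\<^bsub>G'\<^esub> inv\<^bsub>G'\<^esub> z) ` (\<phi> ` H0)" using z by blast
        then show "\<exists>a\<in>H0. z \<otimes>\<^bsub>G'\<^esub> \<phi> a \<otimes>\<^bsub>G'\<^esub> inv\<^bsub>G'\<^esub> z = \<phi> b" by auto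
      qed
      ultimately show False using ncF[OF H0(1) K0(1) nc0 z(1)] by blast
    qed
  qed
qed

end
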